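(* For natural concepts $C_1,C_2,D_1,D_2,E_1,E_2$: $\{C_1:D_1::D_2:C_2,\ C_1:E_1::E_2:C_2\}\models D_1:E_1::E_2:D_2$.
   Context: Concepts: $C,D::=\top\mid\bot\mid A\mid C\sqcap D\mid \exists r.C\mid N$; natural concepts: $N,N'::=A'\mid N\sqcap N'\mid N\bowtie N'\mid \exists r'.N$, with $A$ a concept name, $A'$ a natural concept name, $r$ a role name, $r'$ an intra-domain role name. A domain constrained interpretation is $\mathfrak{I}=(\mathcal{I},[\mathcal{F}_1,\dots,\mathcal{F}_k],\mathcal{X},\pi,\sim,\mathcal{S})$ where $\mathcal{I}=(\Delta^{\mathcal{I}},\cdot^{\mathcal{I}})$ is a classical DL interpretation, $[\mathcal{F}_1,\dots,\mathcal{F}_k]$ partitions a nonempty finite set $\mathcal{F}$, $\mathcal{X}\subseteq2^{\mathcal{F}}$ with $\mathcal{F}\in\mathcal{X}$, $\pi:\Delta^{\mathcal{I}}\to2^{\mathcal{F}}$, $\sim$ an equivalence relation on $\{1,\dots,k\}$, $\mathcal{S}=\{\sigma_{(s,t)}\mid(s,t)\in\sim\}$ with $\sigma_{(s,t)}:\mathcal{F}_s\to\mathcal{F}_t$ bijections. With $\mathcal{C}=\{G\subseteq\mathcal{F}\mid X\not\subseteq G\ \forall X\in\mathcal{X}\}$ and $\mathcal{C}^i=\{G\in\mathcal{C}\mid G\subseteq\mathcal{F}_i\}$ it is required: (1) $X\not\subseteq\pi(d)$ for all $d$, $X\in\mathcal{X}$; (2) each $G\in\mathcal{C}$ is $\pi(d)$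 for some $d$; (3) $\sigma_{(s,t)}^{-1}=\sigma_{(t,s)}$, $\sigma_{(t,u)}\circ\sigma_{(s,t)}=\sigma_{(s,u)}$; (4) $\sigma_{(i,j)}(G)\in\mathcal{C}$ for $G\in\mathcal{C}^i$, $(i,j)\in\sim$; (5) $\{f,g\}\in\mathcal{X}$ whenever $f\in\mathcal{F}_i$, $g\in\mathcal{F}_j$, $(i,j)\in\sim$, $i\neq j$. $\varphi(C)=\bigcap\{\pi(d)\mid d\in C^{\mathcal{I}}\}$ ($=\mathcal{F}$ if $C^{\mathcal{I}}=\emptyset$). Concepts are interpreted as usual, with $(N\bowtie N')^{\mathcal{I}}=\{d\mid\varphi(N)\cap\varphi(N')\subseteq\pi(d)\}$. An intra-domain relation $r$: there is $\kappa_r:2^{\mathcal{F}}\to2^{\mathcal{F}}$ with $(\exists r.C)^{\mathcal{I}}=\{d\mid\kappa_r(\varphi(C))\subseteq\pi(d)\}$ for all $C$, $\kappa_r(G)=\bigcup_i\kappa_r(G\cap\mathcal{F}_i)$ for $G\in\mathcal{C}$, $\kappa_r(G)\subseteq\mathcal{F}_i$ for $G\in\mathcal{C}^i$, $\kappa_r(\sigma_{(i,j)}(G))=\sigma_{(i,j)}(\kappa_r(G))$ for $(i,j)\in\sim$, $G\in\mathcal{C}^i$, and $\kappa_r(G)\neq\emptyset$ for $G\in\mathcal{C}^i\setminus\{\emptyset\}$. $\delta(C)=\{i\mid\mathcal{F}_i\cap\varphi(C)\neq\emptyset\}$. For $U=\{(s_1,t_1),\dots,(s_l,t_l)\}\subseteq\sim$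 with pairwise distinct $s_i$ and pairwise distinct $t_i$, the domain translation $\sigma_U:\mathcal{F}\to\mathcal{F}$ maps $f\in\mathcal{F}_{s_i}$ to $\sigma_{(s_i,t_i)}(f)$ and fixes all other features; $\mathrm{src}(U)=\{s_i\}$, $\mathrm{tgt}(U)=\{t_i\}$. $\mu(C,D)$ is the set of $\sigma_U$ with $\varphi(D)=\sigma_U(\varphi(C))$, $\mathrm{src}(U)\subseteq\delta(C)$, $\mathrm{tgt}(U)\cap(\delta(C)\setminus\mathrm{src}(U))=\emptyset$. An analogy assertion $C_1:C_2::D_1:D_2$ (between natural concepts) is satisfied in $\mathfrak{I}$ iff $\mu(C_1,C_2)\cap\mu(D_1,D_2)\neq\emptyset$; a concept inclusion $C\sqsubseteq D$ is satisfied iff $C^{\mathcal{I}}\subseteq D^{\mathcal{I}}$. A TBox is a finite set of concept inclusions and analogy assertions. $\mathfrak{I}$ is a model of a TBox $\mathcal{T}$ if it satisfies all its elements, every natural concept $N$ in $\mathcal{T}$ satisfies $N^{\mathcal{I}}=\{d\mid\varphi(N)\subseteq\pi(d)\}$, and every intra-domain role name is interpreted as an intra-domain relation. $\mathcal{T}\models\psi$ means every model of $\mathcal{T}$ satisfies $\psi$. *)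

theory Defs
  imports Main
begin

text \<open>Role names: ordinary role names (R r) and intra-domain role names (IR r).\<close>
datatype 'r role = R 'r | IR 'r

text \<open>Concepts. CN a is a concept name, NN a a natural concept name,
  Bowtie N N' the operator written with the bowtie symbol.\<close>
datatype ('a,'r) concept =
    Top | Bot | CN 'a | NN 'a
  | Conj "('a,'r) concept" "('a,'r) concept"
  | Ex "'r role" "('a,'r) concept"
  | Bowtie "('a,'r) concept" "('a,'r) concept"

fun natural :: "('a,'r) concept \<Rightarrow> bool" where
  "natural (NN a) = True"
| "natural (Conj N N') = (natural N \<and> natural N')"
| "natural (Bowtie N N') = (natural N \<and> natural N')"
| "natural (Ex (IR r) N) = natural N"
| "natural _ = False"

fun wf_concept :: "('a,'r) concept \<Rightarrow> bool" where
  "wf_concept (Conj C D) = (wf_concept C \<and> wf_concept D)"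
| "wf_concept (Ex r C) = wf_concept C"
| "wf_concept (Bowtie N N') = (natural N \<and> natural N')"
| "wf_concept _ = True"

primrec subconcepts :: "('a,'r) concept \<Rightarrow> ('a,'r) concept set" where
  "subconcepts Top = {Top}"
| "subconcepts Bot = {Bot}"
| "subconcepts (CN a) = {CN a}"
| "subconcepts (NN a) = {NN a}"
| "subconcepts (Conj C D) = insert (Conj C D) (subconcepts C \<union> subconcepts D)"
| "subconcepts (Ex r C) = insert (Ex r C) (subconcepts C)"
| "subconcepts (Bowtie C D) = insert (Bowtie C D) (subconcepts C \<union> subconcepts D)"

datatype ('a,'r) axiom =
    CI "('a,'r) concept" "('a,'r) concept"
  | Analogy "('a,'r) concept" "('a,'r) concept" "('a,'r) concept" "('a,'r) concept"

fun ax_concepts :: "('a,'r) axiom \<Rightarrow> ('a,'r) concept set" where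
  "ax_concepts (CI C D) = subconcepts C \<union> subconcepts D"
| "ax_concepts (Analogy A B C D) =
     subconcepts A \<union> subconcepts B \<union> subconcepts C \<union> subconcepts D"

text \<open>The partition [F_1,...,F_k] is given by k and the map part on indices 1..k;
  sig s t is the bijection sigma_(s,t).\<close>
record ('a,'r,'d,'f) dci =
  Delta :: "'d set"
  cint :: "'a \<Rightarrow> 'd set"
  nint :: "'a \<Rightarrow> 'd set"
  rint :: "'r role \<Rightarrow> ('d \<times> 'd) set"
  feats :: "'f set"
  nparts :: nat
  part :: "nat \<Rightarrow> 'f set"
  XX :: "'f set set"
  ppi :: "'d \<Rightarrow> 'f set"
  sim :: "(nat \<times> nat) set"
  sig :: "nat \<Rightarrow> nat \<Rightarrow> 'f \<Rightarrow> 'f"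

definition Cset :: "('a,'r,'d,'f) dci \<Rightarrow> 'f set set" where
  "Cset I = {G. G \<subseteq> feats I \<and> (\<forall>X\<in>XX I. \<not> X \<subseteq> G)}"

definition Ci :: "('a,'r,'d,'f) dci \<Rightarrow> nat \<Rightarrow> 'f set set" where
  "Ci I i = {G \<in> Cset I. G \<subseteq> part I i}"

definition valid_dci :: "('a,'r,'d,'f) dci \<Rightarrow> bool" where
  "valid_dci I \<longleftrightarrow>
     Delta I \<noteq> {} \<and>
     (\<forall>a. cint I a \<subseteq> Delta I) \<and> (\<forall>a. nint I a \<subseteq> Delta I) \<and>
     (\<forall>r. rint I r \<subseteq> Delta I \<times> Delta I) \<and>
     finite (feats I) \<and> feats I \<noteq> {} \<and>
     (\<forall>i\<in>{1..nparts I}. part I i \<noteq> {}) \<and>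
     (\<forall>i\<in>{1..nparts I}. \<forall>j\<in>{1..nparts I}. i \<noteq> j \<longrightarrow> part I i \<inter> part I j = {}) \<and>
     (\<Union>i\<in>{1..nparts I}. part I i) = feats I \<and>
     XX I \<subseteq> Pow (feats I) \<and> feats I \<in> XX I \<and>
     (\<forall>d\<in>Delta I. ppi I d \<subseteq> feats I) \<and>
     equiv {1..nparts I} (sim I) \<and>
     (\<forall>(s,t)\<in>sim I. bij_betw (sig I s t) (part I s) (part I t)) \<and>
     \<comment> \<open>(1)\<close>
     (\<forall>d\<in>Delta I. \<forall>X\<in>XX I. \<not> X \<subseteq> ppi I d) \<and>
     \<comment> \<open>(2)\<close>
     (\<forall>G\<in>Cset I. \<exists>d\<in>Delta I. ppi I d = G) \<and>
     \<comment> \<open>(3)\<close>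
     (\<forall>(s,t)\<in>sim I. \<forall>x\<in>part I s. sig I t s (sig I s t x) = x) \<and>
     (\<forall>s t u. (s,t) \<in> sim I \<and> (t,u) \<in> sim I \<longrightarrow>
         (\<forall>x\<in>part I s. sig I t u (sig I s t x) = sig I s u x)) \<and>
     \<comment> \<open>(4)\<close>
     (\<forall>(i,j)\<in>sim I. \<forall>G\<in>Ci I i. sig I i j ` G \<in> Cset I) \<and>
     \<comment> \<open>(5)\<close>
     (\<forall>(i,j)\<in>sim I. i \<noteq> j \<longrightarrow> (\<forall>f\<in>part I i. \<forall>g\<in>part I j. {f,g} \<in> XX I))"

definition phiS :: "('a,'r,'d,'f) dci \<Rightarrow> 'd set \<Rightarrow> 'f set" where
  "phiS I S = (if S = {} then feats I else \<Inter>(ppi I ` S))"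

primrec ext :: "('a,'r,'d,'f) dci \<Rightarrow> ('a,'r) concept \<Rightarrow> 'd set" where
  "ext I Top = Delta I"
| "ext I Bot = {}"
| "ext I (CN a) = cint I a"
| "ext I (NN a) = nint I a"
| "ext I (Conj C D) = ext I C \<inter> ext I D"
| "ext I (Ex r C) = {d \<in> Delta I. \<exists>e. (d,e) \<in> rint I r \<and> e \<in> ext I C}"
| "ext I (Bowtie C D) =
     {d \<in> Delta I. phiS I (ext I C) \<inter> phiS I (ext I D) \<subseteq> ppi I d}"

definition phi :: "('a,'r,'d,'f) dci \<Rightarrow> ('a,'r) concept \<Rightarrow> 'f set" where
  "phi I C = phiS I (ext I C)"

definition intra_domain :: "('a,'r,'d,'f) dci \<Rightarrow> 'r role \<Rightarrow> bool" where
  "intra_domain I r \<longleftrightarrow> (\<exists>\<kappa> :: 'f set \<Rightarrow> 'f set.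
     (\<forall>G. G \<subseteq> feats I \<longrightarrow> \<kappa> G \<subseteq> feats I) \<and>
     (\<forall>C. wf_concept C \<longrightarrow> ext I (Ex r C) = {d \<in> Delta I. \<kappa> (phi I C) \<subseteq> ppi I d}) \<and>
     (\<forall>G\<in>Cset I. \<kappa> G = (\<Union>i\<in>{1..nparts I}. \<kappa> (G \<inter> part I i))) \<and>
     (\<forall>i\<in>{1..nparts I}. \<forall>G\<in>Ci I i. \<kappa> G \<subseteq> part I i) \<and>
     (\<forall>(i,j)\<in>sim I. \<forall>G\<in>Ci I i. \<kappa> (sig I i j ` G) = sig I i j ` \<kappa> G) \<and>
     (\<forall>i\<in>{1..nparts I}. \<forall>G\<in>Ci I i. G \<noteq> {} \<longrightarrow> \<kappa> G \<noteq> {}))"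

definition delta :: "('a,'r,'d,'f) dci \<Rightarrow> ('a,'r) concept \<Rightarrow> nat set" where
  "delta I C = {i \<in> {1..nparts I}. part I i \<inter> phi I C \<noteq> {}}"

definition validU :: "('a,'r,'d,'f) dci \<Rightarrow> (nat \<times> nat) set \<Rightarrow> bool" where
  "validU I U \<longleftrightarrow> U \<subseteq> sim I \<and> inj_on fst U \<and> inj_on snd U"

definition sigU :: "('a,'r,'d,'f) dci \<Rightarrow> (nat \<times> nat) set \<Rightarrow> 'f \<Rightarrow> 'f" where
  "sigU I U f =
     (if \<exists>p\<in>U. f \<in> part I (fst p)
      then (let p = (SOME p. p \<in> U \<and> f \<in> part I (fst p)) in sig I (fst p) (snd p) f)
      else f)"

definition mu :: "('a,'r,'d,'f) dci \<Rightarrow> ('a,'r) concept \<Rightarrow> ('a,'r) concept \<Rightarrow> ('f \<Rightarrow> 'f) set" where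
  "mu I C D = {sigU I U | U. validU I U \<and> phi I D = sigU I U ` phi I C \<and>
                  fst ` U \<subseteq> delta I C \<and> snd ` U \<inter> (delta I C - fst ` U) = {}}"

fun sat :: "('a,'r,'d,'f) dci \<Rightarrow> ('a,'r) axiom \<Rightarrow> bool" where
  "sat I (CI C D) = (ext I C \<subseteq> ext I D)"
| "sat I (Analogy C1 C2 D1 D2) = (mu I C1 C2 \<inter> mu I D1 D2 \<noteq> {})"

definition is_model :: "('a,'r,'d,'f) dci \<Rightarrow> ('a,'r) axiom set \<Rightarrow> bool" where
  "is_model I T \<longleftrightarrow> valid_dci I \<and> (\<forall>ax\<in>T. sat I ax) \<and>
     (\<forall>N \<in> (\<Union>ax\<in>T. ax_concepts ax). natural N \<longrightarrow>
         ext I N = {d \<in> Delta I. phi I N \<subseteq> ppi I d}) \<and>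
     (\<forall>r. intra_domain I (IR r))"

end

theory Submission
  imports Defs
begin


abbreviation Idx :: "('a,'r,'d,'f) dci \<Rightarrow> nat set" where "Idx I \<equiv> {1..nparts I}"

definition idx :: "('a,'r,'d,'f) dci \<Rightarrow> 'f \<Rightarrow> nat" where "idx I f = (THE i. i \<in> Idx I \<and> f \<in> part I i)"
definition tr :: "('a,'r,'d,'f) dci \<Rightarrow> (nat \<Rightarrow> nat) \<Rightarrow> 'f \<Rightarrow> 'f" where "tr I u f = sig I (idx I f) (u (idx I f)) f"
definition okmap :: "('a,'r,'d,'f) dci \<Rightarrow> (nat \<Rightarrow> nat) \<Rightarrow> bool" where
  "okmap I u \<longleftrightarrow> (\<forall>x\<in>Idx I. (x, u x) \<in> sim I) \<and>
     (\<forall>x\<in>Idx I. \<forall>y\<in>Idx I. u x = u y \<longrightarrow> u x \<noteq> x \<longrightarrow> u y \<noteq> y \<longrightarrow> x = y)"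
definition okfor :: "('a,'r,'d,'f) dci \<Rightarrow> (nat \<Rightarrow> nat) \<Rightarrow> nat set \<Rightarrow> bool" where
  "okfor I u K \<longleftrightarrow> (\<forall>x\<in>Idx I. u x \<noteq> x \<longrightarrow> x \<in> K) \<and> (\<forall>x\<in>K. u x = x \<longrightarrow> (\<forall>y\<in>Idx I. u y = x \<longrightarrow> y = x))"
definition deltaS :: "('a,'r,'d,'f) dci \<Rightarrow> 'f set \<Rightarrow> nat set" where "deltaS I S = {i \<in> Idx I. part I i \<inter> S \<noteq> {}}"

context fixes I :: "('a,'r,'d,'f) dci" assumes V: "valid_dci I"
begin

lemma V_ne: "\<forall>i\<in>{1..nparts I}. part I i \<noteq> {}" using V unfolding valid_dci_def by (elim conjE) assumption
lemma V_disj: "\<forall>i\<in>{1..nparts I}. \<forall>j\<in>{1..nparts I}. i \<noteq> j \<longrightarrow> part I i \<inter> part I j = {}" using V unfolding valid_dci_def by (elim conjE) assumption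
lemma V_un: "(\<Union>i\<in>{1..nparts I}. part I i) = feats I" using V unfolding valid_dci_def by (elim conjE) assumption
lemma V_eq: "equiv {1..nparts I} (sim I)" using V unfolding valid_dci_def by (elim conjE) assumption
lemma V_bij: "\<forall>(s,t)\<in>sim I. bij_betw (sig I s t) (part I s) (part I t)" using V unfolding valid_dci_def by (elim conjE) assumption
lemma V_inv: "\<forall>(s,t)\<in>sim I. \<forall>x\<in>part I s. sig I t s (sig I s t x) = x" using V unfolding valid_dci_def by (elim conjE) assumption
lemma V_tr: "\<forall>s t u. (s,t) \<in> sim I \<and> (t,u) \<in> sim I \<longrightarrow> (\<forall>x\<in>part I s. sig I t u (sig I s t x) = sig I s u x)" using V unfolding valid_dci_def by (elim conjE) assumption

lemma V_cint: "\<forall>a. cint I a \<subseteq> Delta I" using V unfolding valid_dci_def by (elim conjE) assumption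
lemma V_nint: "\<forall>a. nint I a \<subseteq> Delta I" using V unfolding valid_dci_def by (elim conjE) assumption
lemma V_ppi: "\<forall>d\<in>Delta I. ppi I d \<subseteq> feats I" using V unfolding valid_dci_def by (elim conjE) assumption
lemma V_1: "\<forall>d\<in>Delta I. \<forall>X\<in>XX I. \<not> X \<subseteq> ppi I d" using V unfolding valid_dci_def by (elim conjE) assumption
lemma V_5: "\<forall>(i,j)\<in>sim I. i \<noteq> j \<longrightarrow> (\<forall>f\<in>part I i. \<forall>g\<in>part I j. {f,g} \<in> XX I)" using V unfolding valid_dci_def by (elim conjE) assumption
lemma parts_ne: "i \<in> Idx I \<Longrightarrow> part I i \<noteq> {}" using V_ne by blast
lemma disj: "i \<in> Idx I \<Longrightarrow> j \<in> Idx I \<Longrightarrow> f \<in> part I i \<Longrightarrow> f \<in> part I j \<Longrightarrow> i = j"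
  using V_disj by blast
lemma part_sub: "i \<in> Idx I \<Longrightarrow> part I i \<subseteq> feats I" using V_un by blast
lemma feats_part: "f \<in> feats I \<Longrightarrow> \<exists>i\<in>Idx I. f \<in> part I i"
proof -
  assume "f \<in> feats I"
  moreover have "(\<Union>i\<in>Idx I. part I i) = feats I" using V_un by blast
  ultimately show ?thesis by blast
qed
lemma eqv: "equiv (Idx I) (sim I)" using V_eq by blast
lemma sim_in: "(a,b) \<in> sim I \<Longrightarrow> a \<in> Idx I \<and> b \<in> Idx I"
  using eqv unfolding equiv_def refl_on_def by blast
lemma sim_refl: "a \<in> Idx I \<Longrightarrow> (a,a) \<in> sim I"
  using eqv unfolding equiv_def refl_on_def by blast
lemma sim_sym: "(a,b) \<in> sim I \<Longrightarrow> (b,a) \<in> sim I"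
  using eqv unfolding equiv_def sym_def by blast
lemma sim_trans: "(a,b) \<in> sim I \<Longrightarrow> (b,c) \<in> sim I \<Longrightarrow> (a,c) \<in> sim I"
  using eqv unfolding equiv_def trans_def by blast
lemma sig_mem: "(s,t) \<in> sim I \<Longrightarrow> f \<in> part I s \<Longrightarrow> sig I s t f \<in> part I t"
proof -
  assume st: "(s,t) \<in> sim I" and f: "f \<in> part I s"
  have "bij_betw (sig I s t) (part I s) (part I t)" using V_bij st by blast
  then show ?thesis using f bij_betw_apply by metis
qed
lemma sig_inv: "(s,t) \<in> sim I \<Longrightarrow> f \<in> part I s \<Longrightarrow> sig I t s (sig I s t f) = f"
  using V_inv by blast
lemma sig_trans: "(s,t) \<in> sim I \<Longrightarrow> (t,u) \<in> sim I \<Longrightarrow> f \<in> part I s \<Longrightarrow> sig I t u (sig I s t f) = sig I s u f"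
  using V_tr by blast
lemma sig_id: "s \<in> Idx I \<Longrightarrow> f \<in> part I s \<Longrightarrow> sig I s s f = f"
  using sig_inv[OF sim_refl] sig_trans[OF sim_refl sim_refl] by metis

lemma idx_eq: "i \<in> Idx I \<Longrightarrow> f \<in> part I i \<Longrightarrow> idx I f = i"
  unfolding idx_def by (rule the_equality) (use disj in blast)+

lemma tr_part: "x \<in> Idx I \<Longrightarrow> f \<in> part I x \<Longrightarrow> tr I u f = sig I x (u x) f"
  unfolding tr_def using idx_eq by simp

lemma tr_mem: "okmap I u \<Longrightarrow> x \<in> Idx I \<Longrightarrow> f \<in> part I x \<Longrightarrow> tr I u f \<in> part I (u x) \<and> u x \<in> Idx I"
  using tr_part sig_mem sim_in unfolding okmap_def by metis

lemma tr_comp: "okmap I u \<Longrightarrow> okmap I w \<Longrightarrow> okmap I v \<Longrightarrow> x \<in> Idx I \<Longrightarrow> f \<in> part I x \<Longrightarrow> w (u x) = v x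
   \<Longrightarrow> tr I w (tr I u f) = tr I v f"
proof -
  assume ou: "okmap I u" and ow: "okmap I w" and ov: "okmap I v" and x: "x \<in> Idx I" and f: "f \<in> part I x"
    and e: "w (u x) = v x"
  have m: "tr I u f \<in> part I (u x)" "u x \<in> Idx I" using tr_mem[OF ou x f] by auto
  have s1: "(x, u x) \<in> sim I" using ou x unfolding okmap_def by blast
  have s2: "(u x, v x) \<in> sim I" using ow m(2) e unfolding okmap_def by metis
  have "tr I w (tr I u f) = sig I (u x) (v x) (sig I x (u x) f)"
    using tr_part[OF m(2) m(1)] tr_part[OF x f] e by simp
  also have "\<dots> = sig I x (v x) f" using sig_trans[OF s1 s2 f] .
  also have "\<dots> = tr I v f" using tr_part[OF x f] by simp
  finally show ?thesis .
qed

lemma tr_inj: "okmap I u \<Longrightarrow> x \<in> Idx I \<Longrightarrow> f \<in> part I x \<Longrightarrow> g \<in> part I x \<Longrightarrow> tr I u f = tr I u g \<Longrightarrow> f = g"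
proof -
  assume ou: "okmap I u" and x: "x \<in> Idx I" and f: "f \<in> part I x" and g: "g \<in> part I x" and e: "tr I u f = tr I u g"
  have s1: "(x, u x) \<in> sim I" using ou x unfolding okmap_def by blast
  have "sig I x (u x) f = sig I x (u x) g" using e tr_part[OF x f] tr_part[OF x g] by simp
  then show ?thesis using sig_inv[OF s1 f] sig_inv[OF s1 g] by metis
qed

lemma tr_cong: "\<forall>x\<in>Idx I. u x = u' x \<Longrightarrow> f \<in> feats I \<Longrightarrow> tr I u f = tr I u' f"
  using feats_part tr_part by metis

lemma tr_idm: "\<forall>x\<in>Idx I. u x = x \<Longrightarrow> f \<in> feats I \<Longrightarrow> tr I u f = f"
  using feats_part tr_part sig_id by metis

lemma deltaS_feats: "deltaS I (feats I) = Idx I"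
  unfolding deltaS_def using parts_ne part_sub by blast

lemma deltaS_img: "okmap I u \<Longrightarrow> S \<subseteq> feats I \<Longrightarrow> deltaS I (tr I u ` S) = u ` deltaS I S"
proof
  assume ou: "okmap I u" and S: "S \<subseteq> feats I"
  show "deltaS I (tr I u ` S) \<subseteq> u ` deltaS I S"
  proof
    fix i assume "i \<in> deltaS I (tr I u ` S)"
    then obtain f where i: "i \<in> Idx I" "f \<in> S" "tr I u f \<in> part I i" unfolding deltaS_def by blast
    obtain x where x: "x \<in> Idx I" "f \<in> part I x" using feats_part i S by blast
    have "tr I u f \<in> part I (u x)" "u x \<in> Idx I" using tr_mem[OF ou x] by auto
    then have "i = u x" using disj i by blast
    moreover have "x \<in> deltaS I S" unfolding deltaS_def using x i by blast
    ultimately show "i \<in> u ` deltaS I S" by blast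
  qed
next
  assume ou: "okmap I u" and S: "S \<subseteq> feats I"
  show "u ` deltaS I S \<subseteq> deltaS I (tr I u ` S)"
  proof
    fix i assume "i \<in> u ` deltaS I S"
    then obtain x f where x: "x \<in> Idx I" "f \<in> part I x" "f \<in> S" "i = u x" unfolding deltaS_def by blast
    have "tr I u f \<in> part I (u x)" "u x \<in> Idx I" using tr_mem[OF ou x(1,2)] by auto
    then show "i \<in> deltaS I (tr I u ` S)" unfolding deltaS_def using x by blast
  qed
qed

lemma perm_feats: "okmap I u \<Longrightarrow> okfor I u (Idx I) \<Longrightarrow> tr I u ` feats I = feats I"
proof
  assume ou: "okmap I u" and of: "okfor I u (Idx I)"
  show "tr I u ` feats I \<subseteq> feats I"
  proof
    fix g assume "g \<in> tr I u ` feats I"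
    then obtain f where f: "f \<in> feats I" "g = tr I u f" by blast
    obtain x where x: "x \<in> Idx I" "f \<in> part I x" using feats_part f by blast
    show "g \<in> feats I" using tr_mem[OF ou x] part_sub f by blast
  qed
  have inj: "inj_on u (Idx I)"
  proof (rule inj_onI)
    fix x y assume x: "x \<in> Idx I" and y: "y \<in> Idx I" and e: "u x = u y"
    show "x = y"
    proof (cases "u x = x")
      case True then show ?thesis using of x y e unfolding okfor_def by metis
    next
      case False
      show ?thesis
      proof (cases "u y = y")
        case True then show ?thesis using of x y e unfolding okfor_def by metis
      next
        case False then show ?thesis using \<open>u x \<noteq> x\<close> ou x y e unfolding okmap_def by blast
      qed
    qed
  qed
  have sub: "u ` Idx I \<subseteq> Idx I" using ou sim_in unfolding okmap_def by blast
  have surj: "u ` Idx I = Idx I" using endo_inj_surj[OF _ sub inj] by simp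
  show "feats I \<subseteq> tr I u ` feats I"
  proof
    fix g assume "g \<in> feats I"
    then obtain y where y: "y \<in> Idx I" "g \<in> part I y" using feats_part by blast
    have "y \<in> u ` Idx I" using surj y(1) by simp
    then obtain x where x: "x \<in> Idx I" "u x = y" by (metis imageE)
    have s: "(x, y) \<in> sim I" using ou x unfolding okmap_def by blast
    have s': "(y, x) \<in> sim I" using sim_sym[OF s] .
    have f: "sig I y x g \<in> part I x" using sig_mem[OF s' y(2)] .
    have "tr I u (sig I y x g) = sig I x y (sig I y x g)" using tr_part[OF x(1) f] x by simp
    also have "\<dots> = g" using sig_inv[OF s' y(2)] .
    finally show "g \<in> tr I u ` feats I" using f part_sub x by force
  qed
qed

end


definition imap :: "(nat \<times> nat) set \<Rightarrow> nat \<Rightarrow> nat" where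
  "imap U x = (if x \<in> fst ` U then (SOME t. (x,t) \<in> U) else x)"

lemma imap_in: "inj_on fst U \<Longrightarrow> (x,t) \<in> U \<Longrightarrow> imap U x = t"
proof -
  assume inj: "inj_on fst U" and xt: "(x,t) \<in> U"
  have "x \<in> fst ` U" using xt by force
  moreover have "(SOME t. (x,t) \<in> U) = t"
  proof (rule some_equality)
    show "(x,t) \<in> U" by fact
    fix t' assume "(x,t') \<in> U"
    then show "t' = t" using inj xt unfolding inj_on_def by force
  qed
  ultimately show ?thesis unfolding imap_def by simp
qed

lemma imap_out: "x \<notin> fst ` U \<Longrightarrow> imap U x = x" unfolding imap_def by simp

definition Wset :: "('a,'r,'d,'f) dci \<Rightarrow> (nat \<Rightarrow> nat) \<Rightarrow> (nat \<times> nat) set" where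
  "Wset I w = {(x, w x) | x. x \<in> Idx I \<and> w x \<noteq> x}"

context fixes I :: "('a,'r,'d,'f) dci" assumes V: "valid_dci I"
begin

lemma U_Idx: "validU I U \<Longrightarrow> p \<in> U \<Longrightarrow> fst p \<in> Idx I \<and> snd p \<in> Idx I"
  unfolding validU_def using sim_in[OF V] by (metis prod.collapse subsetD)

lemma sigU_tr: "validU I U \<Longrightarrow> f \<in> feats I \<Longrightarrow> sigU I U f = tr I (imap U) f"
proof -
  assume vU: "validU I U" and f: "f \<in> feats I"
  obtain x where x: "x \<in> Idx I" "f \<in> part I x" using feats_part[OF V f] by blast
  have trx: "tr I (imap U) f = sig I x (imap U x) f" using tr_part[OF V x] .
  show ?thesis
  proof (cases "x \<in> fst ` U")
    case True
    then obtain t where xt: "(x,t) \<in> U" by force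
    have im: "imap U x = t" using imap_in vU xt unfolding validU_def by blast
    have ex: "\<exists>p\<in>U. f \<in> part I (fst p)" using xt x by force
    let ?p = "SOME p. p \<in> U \<and> f \<in> part I (fst p)"
    have p: "?p \<in> U \<and> f \<in> part I (fst ?p)" using someI_ex[of "\<lambda>p. p \<in> U \<and> f \<in> part I (fst p)"] ex by blast
    have "fst ?p \<in> Idx I" using U_Idx vU p by blast
    then have "fst ?p = x" using disj[OF V] p x by blast
    then have "?p = (x,t)" using vU p xt unfolding validU_def inj_on_def by (metis fst_conv)
    then have "sigU I U f = sig I x t f" unfolding sigU_def using ex by (simp add: Let_def)
    then show ?thesis using trx im by simp
  next
    case False
    have nex: "\<not> (\<exists>p\<in>U. f \<in> part I (fst p))"
    proof
      assume "\<exists>p\<in>U. f \<in> part I (fst p)"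
      then obtain p where p: "p \<in> U" "f \<in> part I (fst p)" by blast
      have "fst p \<in> Idx I" using U_Idx vU p by blast
      then have "fst p = x" using disj[OF V] p x by blast
      then show False using False p by force
    qed
    then have "sigU I U f = f" unfolding sigU_def by simp
    moreover have "imap U x = x" using imap_out False .
    ultimately show ?thesis using trx sig_id[OF V x] by simp
  qed
qed

lemma okmap_imap: "validU I U \<Longrightarrow> okmap I (imap U)"
proof -
  assume vU: "validU I U"
  have a: "\<forall>x\<in>Idx I. (x, imap U x) \<in> sim I"
  proof
    fix x assume x: "x \<in> Idx I"
    show "(x, imap U x) \<in> sim I"
    proof (cases "x \<in> fst ` U")
      case True
      then obtain t where xt: "(x,t) \<in> U" by force
      then show ?thesis using imap_in vU unfolding validU_def by auto
    next
      case False then show ?thesis using imap_out sim_refl[OF V x] by simp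
    qed
  qed
  have b: "\<forall>x\<in>Idx I. \<forall>y\<in>Idx I. imap U x = imap U y \<longrightarrow> imap U x \<noteq> x \<longrightarrow> imap U y \<noteq> y \<longrightarrow> x = y"
  proof (intro ballI impI)
    fix x y assume e: "imap U x = imap U y" and mx: "imap U x \<noteq> x" and my: "imap U y \<noteq> y"
    have "x \<in> fst ` U" using mx imap_out by metis
    then obtain t where xt: "(x,t) \<in> U" by force
    have "y \<in> fst ` U" using my imap_out by metis
    then obtain t' where yt: "(y,t') \<in> U" by force
    have "t = t'" using e imap_in vU xt yt unfolding validU_def by metis
    then show "x = y" using vU xt yt unfolding validU_def inj_on_def by force
  qed
  show ?thesis unfolding okmap_def using a b by blast
qed

lemma okfor_imap: "validU I U \<Longrightarrow> fst ` U \<subseteq> K \<Longrightarrow> snd ` U \<inter> (K - fst ` U) = {} \<Longrightarrow> okfor I (imap U) K"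
proof -
  assume vU: "validU I U" and s: "fst ` U \<subseteq> K" and t: "snd ` U \<inter> (K - fst ` U) = {}"
  have inj: "inj_on fst U" "inj_on snd U" using vU unfolding validU_def by auto
  have a: "\<forall>x\<in>Idx I. imap U x \<noteq> x \<longrightarrow> x \<in> K" using s imap_out by blast
  have b: "\<forall>x\<in>K. imap U x = x \<longrightarrow> (\<forall>y\<in>Idx I. imap U y = x \<longrightarrow> y = x)"
  proof (intro ballI impI)
    fix x y assume x: "x \<in> K" and fx: "imap U x = x" and y: "y \<in> Idx I" and e: "imap U y = x"
    show "y = x"
    proof (cases "y \<in> fst ` U")
      case True
      then obtain t where yt: "(y,t) \<in> U" by force
      then have "t = x" using imap_in inj e by metis
      then have "x \<in> snd ` U" using yt by force
      then have "x \<in> fst ` U" using t x by blast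
      then obtain t' where xt: "(x,t') \<in> U" by force
      then have "t' = x" using imap_in inj fx by metis
      then show ?thesis using inj(2) xt yt \<open>t = x\<close> unfolding inj_on_def by force
    next
      case False then show ?thesis using imap_out e by metis
    qed
  qed
  show ?thesis unfolding okfor_def using a b by blast
qed

lemma imap_outside: "validU I U \<Longrightarrow> x \<notin> Idx I \<Longrightarrow> imap U x = x"
  using U_Idx imap_out by (metis image_iff)

lemma ext_sub: "ext I C \<subseteq> Delta I"
proof -
  have c: "\<forall>a. cint I a \<subseteq> Delta I" "\<forall>a. nint I a \<subseteq> Delta I" using V_cint[OF V] V_nint[OF V] by blast+
  show ?thesis by (induction C) (use c in auto)
qed

lemma phi_sub: "phi I C \<subseteq> feats I"
proof (cases "ext I C = {}")
  case True then show ?thesis unfolding phi_def phiS_def by simp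
next
  case False
  then obtain d where d: "d \<in> ext I C" by blast
  then have "d \<in> Delta I" using ext_sub by blast
  then have "ppi I d \<subseteq> feats I" using V_ppi[OF V] by blast
  then show ?thesis unfolding phi_def phiS_def using False d by auto
qed

lemma delta_eq: "delta I C = deltaS I (phi I C)"
  unfolding delta_def deltaS_def by blast

lemma sat_type: "phi I C \<noteq> feats I \<Longrightarrow> \<forall>a\<in>deltaS I (phi I C). \<forall>b\<in>deltaS I (phi I C). (a,b) \<in> sim I \<longrightarrow> a = b"
proof (intro ballI impI)
  fix a b assume ne: "phi I C \<noteq> feats I" and a: "a \<in> deltaS I (phi I C)" and b: "b \<in> deltaS I (phi I C)"
    and ab: "(a,b) \<in> sim I"
  have "ext I C \<noteq> {}" using ne unfolding phi_def phiS_def by auto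
  then obtain d where d: "d \<in> ext I C" by blast
  have dD: "d \<in> Delta I" using d ext_sub by blast
  have pd: "phi I C \<subseteq> ppi I d" unfolding phi_def phiS_def using d by auto
  obtain f where f: "f \<in> part I a" "f \<in> phi I C" using a unfolding deltaS_def by blast
  obtain g where g: "g \<in> part I b" "g \<in> phi I C" using b unfolding deltaS_def by blast
  show "a = b"
  proof (rule ccontr)
    assume "a \<noteq> b"
    have h: "a \<noteq> b \<longrightarrow> (\<forall>f\<in>part I a. \<forall>g\<in>part I b. {f,g} \<in> XX I)"
      using bspec[OF V_5[OF V] ab] by simp
    then have "{f,g} \<in> XX I" using \<open>a \<noteq> b\<close> f g by blast
    moreover have "{f,g} \<subseteq> ppi I d" using pd f g by blast
    ultimately show False using V_1[OF V] dD by blast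
  qed
qed

lemma from_mu: "\<sigma> \<in> mu I C D \<Longrightarrow> \<exists>u. okmap I u \<and> okfor I u (deltaS I (phi I C)) \<and> (\<forall>x. x \<notin> Idx I \<longrightarrow> u x = x)
   \<and> (\<forall>f\<in>feats I. \<sigma> f = tr I u f) \<and> phi I D = tr I u ` phi I C"
proof -
  assume "\<sigma> \<in> mu I C D"
  then obtain U where U: "\<sigma> = sigU I U" "validU I U" "phi I D = sigU I U ` phi I C"
     "fst ` U \<subseteq> delta I C" "snd ` U \<inter> (delta I C - fst ` U) = {}" unfolding mu_def by blast
  have e: "\<forall>f\<in>feats I. \<sigma> f = tr I (imap U) f" using sigU_tr U by blast
  have "sigU I U ` phi I C = tr I (imap U) ` phi I C"
    by (rule image_cong[OF refl]) (use e U(1) phi_sub in blast)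
  then have "phi I D = tr I (imap U) ` phi I C" using U(3) by simp
  moreover have "okfor I (imap U) (deltaS I (phi I C))" using okfor_imap[OF U(2) U(4) U(5)] delta_eq by simp
  moreover have "\<forall>x. x \<notin> Idx I \<longrightarrow> imap U x = x" using imap_outside[OF U(2)] by blast
  ultimately show ?thesis using okmap_imap[OF U(2)] e by blast
qed

lemma canon_eq: "okmap I u \<Longrightarrow> okmap I u' \<Longrightarrow> \<forall>x. x \<notin> Idx I \<longrightarrow> u x = x \<Longrightarrow> \<forall>x. x \<notin> Idx I \<longrightarrow> u' x = x
  \<Longrightarrow> \<forall>f\<in>feats I. tr I u f = tr I u' f \<Longrightarrow> u = u'"
proof
  fix x assume ou: "okmap I u" and ou': "okmap I u'" and c: "\<forall>x. x \<notin> Idx I \<longrightarrow> u x = x"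
    and c': "\<forall>x. x \<notin> Idx I \<longrightarrow> u' x = x" and e: "\<forall>f\<in>feats I. tr I u f = tr I u' f"
  show "u x = u' x"
  proof (cases "x \<in> Idx I")
    case True
    obtain f where f: "f \<in> part I x" using parts_ne[OF V True] by blast
    have "f \<in> feats I" using part_sub[OF V True] f by blast
    then have "tr I u f = tr I u' f" using e by blast
    then show ?thesis using tr_mem[OF V ou True f] tr_mem[OF V ou' True f] disj[OF V] by metis
  next
    case False then show ?thesis using c c' by simp
  qed
qed

lemma to_mu: "okmap I w \<Longrightarrow> okfor I w (deltaS I (phi I C)) \<Longrightarrow> phi I D = tr I w ` phi I C
   \<Longrightarrow> sigU I (Wset I w) \<in> mu I C D"
proof -
  assume ow: "okmap I w" and of: "okfor I w (deltaS I (phi I C))" and ph: "phi I D = tr I w ` phi I C"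
  let ?W = "Wset I w"
  have vW: "validU I ?W"
    unfolding validU_def
  proof (intro conjI)
    show "?W \<subseteq> sim I" using ow unfolding okmap_def Wset_def by blast
    show "inj_on fst ?W"
    proof (rule inj_onI)
      fix p q assume p: "p \<in> ?W" and q: "q \<in> ?W" and e: "fst p = fst q"
      obtain x where x: "p = (x, w x)" using p unfolding Wset_def by blast
      obtain y where y: "q = (y, w y)" using q unfolding Wset_def by blast
      show "p = q" using x y e by simp
    qed
    show "inj_on snd ?W"
    proof (rule inj_onI)
      fix p q assume p: "p \<in> ?W" and q: "q \<in> ?W" and e: "snd p = snd q"
      obtain x where x: "p = (x, w x)" "x \<in> Idx I" "w x \<noteq> x" using p unfolding Wset_def by blast
      obtain y where y: "q = (y, w y)" "y \<in> Idx I" "w y \<noteq> y" using q unfolding Wset_def by blast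
      have "w x = w y" using x y e by simp
      then have "x = y" using ow x y unfolding okmap_def by blast
      then show "p = q" using x y by simp
    qed
  qed
  have injW: "inj_on fst ?W" using vW unfolding validU_def by blast
  have im: "\<forall>x\<in>Idx I. imap ?W x = w x"
  proof
    fix x assume x: "x \<in> Idx I"
    show "imap ?W x = w x"
    proof (cases "w x = x")
      case False
      then have "(x, w x) \<in> ?W" unfolding Wset_def using x by blast
      then show ?thesis using imap_in injW by blast
    next
      case True
      have "x \<notin> fst ` ?W" unfolding Wset_def using True by auto
      then show ?thesis using imap_out True by simp
    qed
  qed
  have sw: "\<forall>f\<in>feats I. sigU I ?W f = tr I w f"
    using sigU_tr[OF vW] tr_cong[OF V im] by simp
  have "sigU I ?W ` phi I C = tr I w ` phi I C"
    by (rule image_cong[OF refl]) (use sw phi_sub in blast)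
  then have p: "phi I D = sigU I ?W ` phi I C" using ph by simp
  have s: "fst ` ?W \<subseteq> delta I C" using of unfolding okfor_def Wset_def delta_eq by auto
  have t: "snd ` ?W \<inter> (delta I C - fst ` ?W) = {}"
  proof (rule ccontr)
    assume "snd ` ?W \<inter> (delta I C - fst ` ?W) \<noteq> {}"
    then obtain t where t1: "t \<in> snd ` ?W" "t \<in> delta I C" "t \<notin> fst ` ?W" by blast
    then obtain p where p: "p \<in> ?W" "t = snd p" by blast
    then obtain y where yy: "p = (y, w y)" "y \<in> Idx I" "w y \<noteq> y" unfolding Wset_def by blast
    have y: "y \<in> Idx I" "w y \<noteq> y" "w y \<in> deltaS I (phi I C)" "w y \<notin> fst ` ?W"
      using yy p t1 delta_eq by auto
    have tI: "w y \<in> Idx I" using ow y sim_in[OF V] unfolding okmap_def by blast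
    have "w (w y) = w y"
    proof (rule ccontr)
      assume "w (w y) \<noteq> w y"
      then have "(w y, w (w y)) \<in> ?W" unfolding Wset_def using tI by blast
      then show False using y(4) by force
    qed
    then show False using of y tI unfolding okfor_def by metis
  qed
  show ?thesis unfolding mu_def using vW p s t by blast
qed

end


context
  fixes Ix :: "nat set" and S :: "(nat \<times> nat) set" and u v :: "nat \<Rightarrow> nat"
    and c1 d2 e2 :: "nat set"
  assumes eq: "equiv Ix S"
    and su: "\<forall>x\<in>Ix. (x, u x) \<in> S" and sv: "\<forall>x\<in>Ix. (x, v x) \<in> S"
    and hu: "\<forall>x\<in>Ix. \<forall>y\<in>Ix. u x = u y \<longrightarrow> u x \<noteq> x \<longrightarrow> u y \<noteq> y \<longrightarrow> x = y"
    and hv: "\<forall>x\<in>Ix. \<forall>y\<in>Ix. v x = v y \<longrightarrow> v x \<noteq> x \<longrightarrow> v y \<noteq> y \<longrightarrow> x = y"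
    and c1I: "c1 \<subseteq> Ix" and d2I: "d2 \<subseteq> Ix" and e2I: "e2 \<subseteq> Ix"
    and satc1: "\<forall>a\<in>c1. \<forall>b\<in>c1. (a,b) \<in> S \<longrightarrow> a = b"
    and d2s: "d2 = Ix \<or> (\<forall>a\<in>d2. \<forall>b\<in>d2. (a,b) \<in> S \<longrightarrow> a = b)"
    and e2s: "e2 = Ix \<or> (\<forall>a\<in>e2. \<forall>b\<in>e2. (a,b) \<in> S \<longrightarrow> a = b)"
    and uc1m: "\<forall>x\<in>Ix. u x \<noteq> x \<longrightarrow> x \<in> c1"
    and uc1t: "\<forall>x\<in>c1. u x = x \<longrightarrow> (\<forall>y\<in>Ix. u y = x \<longrightarrow> y = x)"
    and ud2m: "\<forall>x\<in>Ix. u x \<noteq> x \<longrightarrow> x \<in> d2"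
    and ud2t: "\<forall>x\<in>d2. u x = x \<longrightarrow> (\<forall>y\<in>Ix. u y = x \<longrightarrow> y = x)"
    and vc1m: "\<forall>x\<in>Ix. v x \<noteq> x \<longrightarrow> x \<in> c1"
    and vc1t: "\<forall>x\<in>c1. v x = x \<longrightarrow> (\<forall>y\<in>Ix. v y = x \<longrightarrow> y = x)"
    and ve2m: "\<forall>x\<in>Ix. v x \<noteq> x \<longrightarrow> x \<in> e2"
    and ve2t: "\<forall>x\<in>e2. v x = x \<longrightarrow> (\<forall>y\<in>Ix. v y = x \<longrightarrow> y = x)"
    and c2: "u ` d2 = v ` e2"
begin

lemma S_in: "(a,b) \<in> S \<Longrightarrow> a \<in> Ix \<and> b \<in> Ix"
  using eq unfolding equiv_def refl_on_def by blast
lemma S_sym: "(a,b) \<in> S \<Longrightarrow> (b,a) \<in> S"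
  using eq unfolding equiv_def sym_def by blast
lemma S_trans: "(a,b) \<in> S \<Longrightarrow> (b,c) \<in> S \<Longrightarrow> (a,c) \<in> S"
  using eq unfolding equiv_def trans_def by blast
lemma uI: "x \<in> Ix \<Longrightarrow> u x \<in> Ix" using su S_in by blast
lemma vI: "x \<in> Ix \<Longrightarrow> v x \<in> Ix" using sv S_in by blast

lemma u_inj: "inj_on u c1"
proof (rule inj_onI)
  fix x y assume x: "x \<in> c1" and y: "y \<in> c1" and e: "u x = u y"
  show "x = y"
  proof (cases "u x = x")
    case True then show ?thesis using uc1t x y c1I e by force
  next
    case False
    show ?thesis
    proof (cases "u y = y")
      case True then show ?thesis using uc1t x y c1I e by force
    next
      case False then show ?thesis using \<open>u x \<noteq> x\<close> hu x y c1I e by blast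
    qed
  qed
qed

lemma v_inj: "inj_on v c1"
proof (rule inj_onI)
  fix x y assume x: "x \<in> c1" and y: "y \<in> c1" and e: "v x = v y"
  show "x = y"
  proof (cases "v x = x")
    case True then show ?thesis using vc1t x y c1I e by force
  next
    case False
    show ?thesis
    proof (cases "v y = y")
      case True then show ?thesis using vc1t x y c1I e by force
    next
      case False then show ?thesis using \<open>v x \<noteq> x\<close> hv x y c1I e by blast
    qed
  qed
qed

definition "Mset_ix = {y \<in> c1. u y \<noteq> v y}"
definition "wmap_ix x = (if x \<in> u ` Mset_ix then v (inv_into c1 u x) else x)"

lemma w_uy: "y \<in> c1 \<Longrightarrow> wmap_ix (u y) = v y"
proof (cases "u y = v y")
  case False
  assume y: "y \<in> c1"
  then have "u y \<in> u ` Mset_ix" using False unfolding Mset_ix_def by blast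
  then show ?thesis unfolding wmap_ix_def using inv_into_f_f[OF u_inj y] by simp
next
  case True
  assume y: "y \<in> c1"
  have "u y \<notin> u ` Mset_ix"
  proof
    assume "u y \<in> u ` Mset_ix"
    then obtain y' where "y' \<in> c1" "u y' \<noteq> v y'" "u y = u y'" unfolding Mset_ix_def by blast
    then show False using True u_inj y unfolding inj_on_def by metis
  qed
  then show ?thesis unfolding wmap_ix_def using True by simp
qed

lemma w_cases: "x \<in> Ix \<Longrightarrow> (\<exists>y\<in>c1. x = u y \<and> u y \<noteq> v y \<and> wmap_ix x = v y) \<or> (x \<notin> u ` Mset_ix \<and> wmap_ix x = x)"
proof (cases "x \<in> u ` Mset_ix")
  case True
  then obtain y where "y \<in> Mset_ix" "x = u y" by blast
  then show ?thesis using w_uy unfolding Mset_ix_def by auto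
next
  case False then show ?thesis unfolding wmap_ix_def by simp
qed

lemma uy_not_c1: "y \<in> c1 \<Longrightarrow> u y \<noteq> y \<Longrightarrow> u y \<notin> c1"
proof
  assume y: "y \<in> c1" and n: "u y \<noteq> y" and c: "u y \<in> c1"
  have "(y, u y) \<in> S" using su c1I y by blast
  then have "y = u y" using satc1 y c by blast
  then show False using n by simp
qed
lemma vy_not_c1: "y \<in> c1 \<Longrightarrow> v y \<noteq> y \<Longrightarrow> v y \<notin> c1"
proof
  assume y: "y \<in> c1" and n: "v y \<noteq> y" and c: "v y \<in> c1"
  have "(y, v y) \<in> S" using sv c1I y by blast
  then have "y = v y" using satc1 y c by blast
  then show False using n by simp
qed

lemma w_sim: "x \<in> Ix \<Longrightarrow> (x, wmap_ix x) \<in> S"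
proof -
  assume x: "x \<in> Ix"
  from w_cases[OF x] show ?thesis
  proof
    assume "\<exists>y\<in>c1. x = u y \<and> u y \<noteq> v y \<and> wmap_ix x = v y"
    then obtain y where y: "y \<in> c1" "x = u y" "wmap_ix x = v y" by blast
    then have "(u y, y) \<in> S" "(y, v y) \<in> S" using su sv c1I S_sym by auto
    then show ?thesis using y S_trans by metis
  next
    assume "x \<notin> u ` Mset_ix \<and> wmap_ix x = x"
    then show ?thesis using x eq unfolding equiv_def refl_on_def by auto
  qed
qed


lemma w_H3: "x \<in> Ix \<Longrightarrow> x' \<in> Ix \<Longrightarrow> wmap_ix x = wmap_ix x' \<Longrightarrow> wmap_ix x \<noteq> x \<Longrightarrow> wmap_ix x' \<noteq> x' \<Longrightarrow> x = x'"
proof -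
  assume x: "x \<in> Ix" and x': "x' \<in> Ix" and e: "wmap_ix x = wmap_ix x'" and m: "wmap_ix x \<noteq> x" and m': "wmap_ix x' \<noteq> x'"
  obtain y where y: "y \<in> c1" "x = u y" "wmap_ix x = v y" using w_cases[OF x] m by blast
  obtain y' where y': "y' \<in> c1" "x' = u y'" "wmap_ix x' = v y'" using w_cases[OF x'] m' by blast
  have "y = y'" using v_inj y y' e unfolding inj_on_def by metis
  then show ?thesis using y y' by simp
qed

lemma w_m1: "x \<in> Ix \<Longrightarrow> wmap_ix x \<noteq> x \<Longrightarrow> x \<in> u ` c1"
  using w_cases by blast

lemma w_t1: "x \<in> u ` c1 \<Longrightarrow> wmap_ix x = x \<Longrightarrow> t \<in> Ix \<Longrightarrow> wmap_ix t = x \<Longrightarrow> t = x"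
proof (rule ccontr)
  assume x: "x \<in> u ` c1" and wx: "wmap_ix x = x" and t: "t \<in> Ix" and wt: "wmap_ix t = x" and ne: "t \<noteq> x"
  obtain y where y: "y \<in> c1" "t = u y" "u y \<noteq> v y" "wmap_ix t = v y" using w_cases[OF t] wt ne by metis
  obtain z where z: "z \<in> c1" "x = u z" using x by blast
  have "v z = x" using w_uy[OF z(1)] z wx by simp
  then have "v z = v y" using y wt by simp
  then have "z = y" using v_inj y z unfolding inj_on_def by metis
  then show False using y z wt \<open>v z = x\<close> by simp
qed

lemma bad: "y \<in> c1 \<Longrightarrow> v y \<noteq> y \<Longrightarrow> u y \<noteq> y \<Longrightarrow> u y \<in> e2 \<Longrightarrow> False"
proof -
  assume y: "y \<in> c1" and vy: "v y \<noteq> y" and uy: "u y \<noteq> y" and ue: "u y \<in> e2"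
  have yI: "y \<in> Ix" using y c1I by blast
  have ye: "y \<in> e2" using ve2m yI vy by blast
  from e2s show False
  proof
    assume e: "e2 = Ix"
    have "v y \<in> e2" using e vI yI by simp
    show False
    proof (cases "v (v y) = v y")
      case True then have "y = v y" using ve2t \<open>v y \<in> e2\<close> yI by metis
      then show False using vy by simp
    next
      case False then have "v y \<in> c1" using vc1m vI yI by blast
      then show False using vy_not_c1[OF y vy] by blast
    qed
  next
    assume st: "\<forall>a\<in>e2. \<forall>b\<in>e2. (a,b) \<in> S \<longrightarrow> a = b"
    have "(y, u y) \<in> S" using su yI by blast
    then have "y = u y" using st ye ue by blast
    then show False using uy by simp
  qed
qed

lemma w_m2: "x \<in> Ix \<Longrightarrow> wmap_ix x \<noteq> x \<Longrightarrow> x \<in> e2"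
proof -
  assume x: "x \<in> Ix" and m: "wmap_ix x \<noteq> x"
  obtain y where y: "y \<in> c1" "x = u y" "u y \<noteq> v y" "wmap_ix x = v y" using w_cases[OF x] m by blast
  have yI: "y \<in> Ix" using y c1I by blast
  show "x \<in> e2"
  proof (cases "u y = y")
    case True then show ?thesis using ve2m yI y by auto
  next
    case False
    then have "y \<in> d2" using ud2m yI by blast
    then have "u y \<in> v ` e2" using c2 by blast
    then obtain z where z: "z \<in> e2" "u y = v z" by blast
    have zI: "z \<in> Ix" using z e2I by blast
    show ?thesis
    proof (cases "v z = z")
      case True then show ?thesis using z y by simp
    next
      case False
      then have "z \<in> c1" using vc1m zI by blast
      have "(z, v z) \<in> S" "(y, u y) \<in> S" using sv su zI yI by auto
      then have "(z, y) \<in> S" using z S_sym S_trans by metis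
      then have "z = y" using satc1 \<open>z \<in> c1\<close> y by blast
      then show ?thesis using y z by simp
    qed
  qed
qed

lemma w_t2: "x \<in> e2 \<Longrightarrow> wmap_ix x = x \<Longrightarrow> t \<in> Ix \<Longrightarrow> wmap_ix t = x \<Longrightarrow> t = x"
proof (rule ccontr)
  assume x: "x \<in> e2" and wx: "wmap_ix x = x" and t: "t \<in> Ix" and wt: "wmap_ix t = x" and ne: "t \<noteq> x"
  obtain y where y: "y \<in> c1" "t = u y" "u y \<noteq> v y" "wmap_ix t = v y" using w_cases[OF t] wt ne by metis
  have yI: "y \<in> Ix" using y c1I by blast
  have xI: "x \<in> Ix" using x e2I by blast
  have vyx: "v y = x" using y wt by simp
  show False
  proof (cases "v y = y")
    case False
    show False
    proof (cases "v x = x")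
      case True then show False using ve2t x yI vyx False by metis
    next
      case False
      then have "x \<in> c1" using vc1m xI by blast
      then show False using vy_not_c1[OF y(1) \<open>v y \<noteq> y\<close>] vyx by simp
    qed
  next
    case True
    then have xy: "x = y" using vyx by simp
    have uy: "u y \<noteq> y" using y True by simp
    have "y \<in> d2" using ud2m yI uy by blast
    have "y \<in> v ` e2" using x xy True by force
    then have "y \<in> u ` d2" using c2 by simp
    then obtain z where z: "z \<in> d2" "y = u z" by blast
    have zI: "z \<in> Ix" using z d2I by blast
    show False
    proof (cases "u z = z")
      case True then show False using z uy by simp
    next
      case False
      then have "z \<in> c1" using uc1m zI by blast
      have "(z, u z) \<in> S" using su zI by auto
      then have "z = y" using satc1 \<open>z \<in> c1\<close> y z by auto
      then show False using z uy by simp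
    qed
  qed
qed

lemma a1: "x \<in> e2 \<Longrightarrow> u (wmap_ix x) = v x"
proof -
  assume x: "x \<in> e2"
  have xI: "x \<in> Ix" using x e2I by blast
  from w_cases[OF xI] show ?thesis
  proof
    assume "\<exists>y\<in>c1. x = u y \<and> u y \<noteq> v y \<and> wmap_ix x = v y"
    then obtain y where y: "y \<in> c1" "x = u y" "u y \<noteq> v y" "wmap_ix x = v y" by blast
    have yI: "y \<in> Ix" using y c1I by blast
    show ?thesis
    proof (cases "v y = y")
      case False
      have "u y = y" using bad y False x by blast
      have "v y \<notin> c1" using vy_not_c1 y False by blast
      then have "u (v y) = v y" using uc1m vI yI by blast
      then show ?thesis using y \<open>u y = y\<close> by simp
    next
      case True
      have "u y \<notin> c1" using uy_not_c1 y True by force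
      then have "v (u y) = u y" using vc1m uI yI by blast
      then show ?thesis using y True by simp
    qed
  next
    assume a: "x \<notin> u ` Mset_ix \<and> wmap_ix x = x"
    show ?thesis
    proof (cases "v x = x")
      case False
      then have xc: "x \<in> c1" using vc1m xI by blast
      have ux: "u x \<noteq> x"
      proof
        assume "u x = x"
        then have "x \<in> Mset_ix" unfolding Mset_ix_def using xc False by simp
        then have "u x \<in> u ` Mset_ix" by blast
        then show False using a \<open>u x = x\<close> by simp
      qed
      have "x \<in> d2" using ud2m xI ux by blast
      have "v x \<in> u ` d2" using c2 x by blast
      then obtain z where z: "z \<in> d2" "v x = u z" by blast
      have zI: "z \<in> Ix" using z d2I by blast
      have "(z, u z) \<in> S" "(x, v x) \<in> S" using su sv zI xI by auto
      then have zx: "(z, x) \<in> S" using z S_sym S_trans by metis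
      from d2s show ?thesis
      proof
        assume "\<forall>a\<in>d2. \<forall>b\<in>d2. (a,b) \<in> S \<longrightarrow> a = b"
        then have "z = x" using zx z \<open>x \<in> d2\<close> by blast
        then show ?thesis using a z by simp
      next
        assume d: "d2 = Ix"
        have "u x \<in> d2" using d uI xI by simp
        show ?thesis
        proof (cases "u (u x) = u x")
          case True then have "x = u x" using ud2t \<open>u x \<in> d2\<close> xI by metis
          then show ?thesis using ux by simp
        next
          case False then have "u x \<in> c1" using uc1m uI xI by blast
          then show ?thesis using uy_not_c1[OF xc ux] by simp
        qed
      qed
    next
      case True
      show ?thesis
      proof (rule ccontr)
        assume ne: "u (wmap_ix x) \<noteq> v x"
        then have ux: "u x \<noteq> x" using a True by simp
        have xc: "x \<in> c1" using uc1m xI ux by blast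
        have "x \<in> u ` d2" using c2 x True by force
        then obtain z where z: "z \<in> d2" "x = u z" by blast
        have zI: "z \<in> Ix" using z d2I by blast
        show False
        proof (cases "u z = z")
          case True then show False using z ux by simp
        next
          case False
          then have "z \<in> c1" using uc1m zI by blast
          have "(z, u z) \<in> S" using su zI by auto
          then have "z = x" using satc1 \<open>z \<in> c1\<close> xc z by auto
          then show False using z ux by simp
        qed
      qed
    qed
  qed
qed

lemma b1: "z \<in> d2 \<Longrightarrow> x \<in> e2 \<Longrightarrow> u z = v x \<Longrightarrow> z = wmap_ix x"
proof -
  assume z: "z \<in> d2" and x: "x \<in> e2" and e: "u z = v x"
  have xI: "x \<in> Ix" using x e2I by blast
  have zI: "z \<in> Ix" using z d2I by blast
  from w_cases[OF xI] show ?thesis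
  proof
    assume "\<exists>y\<in>c1. x = u y \<and> u y \<noteq> v y \<and> wmap_ix x = v y"
    then obtain y where y: "y \<in> c1" "x = u y" "u y \<noteq> v y" "wmap_ix x = v y" by blast
    have yI: "y \<in> Ix" using y c1I by blast
    show ?thesis
    proof (cases "v y = y")
      case False
      have uy: "u y = y" using bad y False x by blast
      show ?thesis
      proof (cases "u z = z")
        case True then show ?thesis using e y uy by simp
      next
        case False
        then have "z \<in> c1" using uc1m zI by blast
        have "(z, u z) \<in> S" "(y, v y) \<in> S" using su sv zI yI by auto
        then have "(z, y) \<in> S" using e y uy S_sym S_trans by metis
        then have "z = y" using satc1 \<open>z \<in> c1\<close> y by blast
        then show ?thesis using e y uy by simp
      qed
    next
      case True
      have uy: "u y \<noteq> y" using y True by simp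
      have "u y \<notin> c1" using uy_not_c1 y uy by blast
      then have "v (u y) = u y" using vc1m uI yI by blast
      then have uzy: "u z = u y" using e y by simp
      show ?thesis
      proof (cases "u z = z")
        case False
        then have "z = y" using hu zI yI uzy uy by metis
        then show ?thesis using y True by simp
      next
        case True
        then have "y = z" using ud2t z yI uzy by metis
        then show ?thesis using True uy by simp
      qed
    qed
  next
    assume a: "x \<notin> u ` Mset_ix \<and> wmap_ix x = x"
    have "u (wmap_ix x) = v x" using a1[OF x] .
    then have uxv: "u x = v x" using a by simp
    have uz: "u z = u x" using e uxv by simp
    show ?thesis
    proof (cases "u z = z")
      case True
      show ?thesis
      proof (cases "u x = x")
        case True then show ?thesis using uz \<open>u z = z\<close> a by simp
      next
        case False
        then have "x = z" using ud2t z xI uz True by metis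
        then show ?thesis using a by simp
      qed
    next
      case False
      show ?thesis
      proof (cases "u x = x")
        case False then show ?thesis using hu zI xI uz \<open>u z \<noteq> z\<close> a by metis
      next
        case True
        have zc: "z \<in> c1" using uc1m zI \<open>u z \<noteq> z\<close> by blast
        have vz: "v z = u z"
        proof (rule ccontr)
          assume "v z \<noteq> u z"
          then have "z \<in> Mset_ix" unfolding Mset_ix_def using zc by auto
          then have "u z \<in> u ` Mset_ix" by blast
          then show False using a uz True by simp
        qed
        have "v x = x" using uxv True by simp
        have "v z = x" using vz uz True by simp
        then have "z = x" using ve2t x \<open>v x = x\<close> zI by metis
        then show ?thesis using a by simp
      qed
    qed
  qed
qed

lemma index_core:
  "\<exists>wmap_ix. (\<forall>x\<in>Ix. (x, wmap_ix x) \<in> S)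
     \<and> (\<forall>x\<in>Ix. \<forall>y\<in>Ix. wmap_ix x = wmap_ix y \<longrightarrow> wmap_ix x \<noteq> x \<longrightarrow> wmap_ix y \<noteq> y \<longrightarrow> x = y)
     \<and> (\<forall>x\<in>Ix. wmap_ix x \<noteq> x \<longrightarrow> x \<in> u ` c1)
     \<and> (\<forall>x\<in>u ` c1. wmap_ix x = x \<longrightarrow> (\<forall>y\<in>Ix. wmap_ix y = x \<longrightarrow> y = x))
     \<and> (\<forall>x\<in>Ix. wmap_ix x \<noteq> x \<longrightarrow> x \<in> e2)
     \<and> (\<forall>x\<in>e2. wmap_ix x = x \<longrightarrow> (\<forall>y\<in>Ix. wmap_ix y = x \<longrightarrow> y = x))
     \<and> (\<forall>y\<in>c1. wmap_ix (u y) = v y) \<and> (\<forall>x\<in>e2. u (wmap_ix x) = v x)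
     \<and> (\<forall>z\<in>d2. \<forall>x\<in>e2. u z = v x \<longrightarrow> z = wmap_ix x)"
proof (rule exI[of _ wmap_ix], intro conjI)
  show "\<forall>x\<in>Ix. (x, wmap_ix x) \<in> S" using w_sim by blast
  show "\<forall>x\<in>Ix. \<forall>y\<in>Ix. wmap_ix x = wmap_ix y \<longrightarrow> wmap_ix x \<noteq> x \<longrightarrow> wmap_ix y \<noteq> y \<longrightarrow> x = y" using w_H3 by blast
  show "\<forall>x\<in>Ix. wmap_ix x \<noteq> x \<longrightarrow> x \<in> u ` c1" using w_m1 by blast
  show "\<forall>x\<in>u ` c1. wmap_ix x = x \<longrightarrow> (\<forall>y\<in>Ix. wmap_ix y = x \<longrightarrow> y = x)" using w_t1 by blast
  show "\<forall>x\<in>Ix. wmap_ix x \<noteq> x \<longrightarrow> x \<in> e2" using w_m2 by blast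
  show "\<forall>x\<in>e2. wmap_ix x = x \<longrightarrow> (\<forall>y\<in>Ix. wmap_ix y = x \<longrightarrow> y = x)" using w_t2 by blast
  show "\<forall>y\<in>c1. wmap_ix (u y) = v y" using w_uy by blast
  show "\<forall>x\<in>e2. u (wmap_ix x) = v x" using a1 by blast
  show "\<forall>z\<in>d2. \<forall>x\<in>e2. u z = v x \<longrightarrow> z = wmap_ix x" using b1 by blast
qed

end


definition satT :: "('a,'r,'d,'f) dci \<Rightarrow> nat set \<Rightarrow> bool" where
  "satT I K \<longleftrightarrow> (\<forall>a\<in>K. \<forall>b\<in>K. (a,b) \<in> sim I \<longrightarrow> a = b)"

context fixes I :: "('a,'r,'d,'f) dci" assumes V: "valid_dci I"
begin

lemma fix_all: "okmap I u \<Longrightarrow> okfor I u (Idx I) \<Longrightarrow> okfor I u K \<Longrightarrow> satT I K \<Longrightarrow> \<forall>x\<in>Idx I. u x = x"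
proof
  fix x assume ou: "okmap I u" and oI: "okfor I u (Idx I)" and oK: "okfor I u K" and st: "satT I K" and x: "x \<in> Idx I"
  show "u x = x"
  proof (rule ccontr)
    assume n: "u x \<noteq> x"
    have s: "(x, u x) \<in> sim I" using ou x unfolding okmap_def by blast
    have uI: "u x \<in> Idx I" using sim_in[OF V s] by blast
    have xK: "x \<in> K" using oK x n unfolding okfor_def by blast
    have "u (u x) \<noteq> u x"
    proof
      assume "u (u x) = u x"
      then have "x = u x" using oI uI x unfolding okfor_def by metis
      then show False using n by simp
    qed
    then have "u x \<in> K" using oK uI unfolding okfor_def by blast
    then have "x = u x" using st xK s unfolding satT_def by blast
    then show False using n by simp
  qed
qed

lemma img_id: "\<forall>x\<in>Idx I. u x = x \<Longrightarrow> P \<subseteq> feats I \<Longrightarrow> tr I u ` P = P"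
proof -
  assume a: "\<forall>x\<in>Idx I. u x = x" and P: "P \<subseteq> feats I"
  have "tr I u ` P = id ` P" by (rule image_cong[OF refl]) (use tr_idm[OF V a] P in auto)
  then show ?thesis by simp
qed

lemma okmap_id: "okmap I id" unfolding okmap_def using sim_refl[OF V] by simp
lemma okfor_id: "okfor I id K" unfolding okfor_def by simp

lemma core:
  assumes ou: "okmap I u" and ov: "okmap I v"
    and sc: "pc1 \<subseteq> feats I" and sd: "pd2 \<subseteq> feats I" and se: "pe2 \<subseteq> feats I"
    and ouc: "okfor I u (deltaS I pc1)" and oud: "okfor I u (deltaS I pd2)"
    and ovc: "okfor I v (deltaS I pc1)" and ove: "okfor I v (deltaS I pe2)"
    and pd1: "pd1 = tr I u ` pc1" and pc2: "pc2 = tr I u ` pd2"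
    and pe1: "pe1 = tr I v ` pc1" and pc2': "pc2 = tr I v ` pe2"
    and s1: "pc1 = feats I \<or> satT I (deltaS I pc1)"
    and s2: "pd2 = feats I \<or> satT I (deltaS I pd2)"
    and s3: "pe2 = feats I \<or> satT I (deltaS I pe2)"
  shows "\<exists>w. okmap I w \<and> okfor I w (deltaS I pd1) \<and> okfor I w (deltaS I pe2)
           \<and> pe1 = tr I w ` pd1 \<and> pd2 = tr I w ` pe2"
proof (cases "pc1 = feats I")
  case True
  have dc: "deltaS I pc1 = Idx I" using True deltaS_feats[OF V] by simp
  have ouI: "okfor I u (Idx I)" using ouc dc by simp
  have ovI: "okfor I v (Idx I)" using ovc dc by simp
  have fd1: "pd1 = feats I" using pd1 True perm_feats[OF V ou ouI] by simp
  have fe1: "pe1 = feats I" using pe1 True perm_feats[OF V ov ovI] by simp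
  have dd1: "deltaS I pd1 = Idx I" using fd1 deltaS_feats[OF V] by simp
  show ?thesis
  proof (cases "pd2 = feats I")
    case True
    have "pc2 = feats I" using pc2 True perm_feats[OF V ou ouI] by simp
    then have "pd2 = tr I v ` pe2" using pc2' True by simp
    moreover have "pe1 = tr I v ` pd1" using fe1 fd1 perm_feats[OF V ov ovI] by simp
    ultimately show ?thesis using ov ovI ove dd1 by (intro exI[of _ v]) simp
  next
    case False
    then have sd2: "satT I (deltaS I pd2)" using s2 by simp
    have uid: "\<forall>x\<in>Idx I. u x = x" using fix_all[OF ou ouI oud sd2] .
    have c2d2: "pc2 = pd2" using pc2 img_id[OF uid sd] by simp
    have ne2: "pe2 \<noteq> feats I"
    proof
      assume "pe2 = feats I"
      then have "pc2 = feats I" using pc2' perm_feats[OF V ov ovI] by simp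
      then show False using False c2d2 by simp
    qed
    then have se2: "satT I (deltaS I pe2)" using s3 by simp
    have vid: "\<forall>x\<in>Idx I. v x = x" using fix_all[OF ov ovI ove se2] .
    have "pe2 = pd2" using pc2' img_id[OF vid se] c2d2 by simp
    moreover have idI: "\<forall>x\<in>Idx I. id x = x" by simp
    ultimately have "pd2 = tr I id ` pe2" using img_id[OF idI se] by (simp add: id_def)
    moreover have "pe1 = tr I id ` pd1" using fe1 fd1 img_id[OF idI] by (simp add: id_def)
    ultimately show ?thesis using okmap_id okfor_id by blast
  qed
next
  case False
  then have sc1: "satT I (deltaS I pc1)" using s1 by simp
  have dsub: "\<And>P. deltaS I P \<subseteq> Idx I" unfolding deltaS_def by blast
  have d2s: "deltaS I pd2 = Idx I \<or> (\<forall>a\<in>deltaS I pd2. \<forall>b\<in>deltaS I pd2. (a,b) \<in> sim I \<longrightarrow> a = b)"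
    using s2 deltaS_feats[OF V] unfolding satT_def by auto
  have e2s: "deltaS I pe2 = Idx I \<or> (\<forall>a\<in>deltaS I pe2. \<forall>b\<in>deltaS I pe2. (a,b) \<in> sim I \<longrightarrow> a = b)"
    using s3 deltaS_feats[OF V] unfolding satT_def by auto
  have c2: "u ` deltaS I pd2 = v ` deltaS I pe2"
    using deltaS_img[OF V ou sd] deltaS_img[OF V ov se] pc2 pc2' by simp
  have dd1: "deltaS I pd1 = u ` deltaS I pc1" using deltaS_img[OF V ou sc] pd1 by simp
  have ex: "\<exists>w. (\<forall>x\<in>Idx I. (x, w x) \<in> sim I)
     \<and> (\<forall>x\<in>Idx I. \<forall>y\<in>Idx I. w x = w y \<longrightarrow> w x \<noteq> x \<longrightarrow> w y \<noteq> y \<longrightarrow> x = y)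
     \<and> (\<forall>x\<in>Idx I. w x \<noteq> x \<longrightarrow> x \<in> u ` deltaS I pc1)
     \<and> (\<forall>x\<in>u ` deltaS I pc1. w x = x \<longrightarrow> (\<forall>y\<in>Idx I. w y = x \<longrightarrow> y = x))
     \<and> (\<forall>x\<in>Idx I. w x \<noteq> x \<longrightarrow> x \<in> deltaS I pe2)
     \<and> (\<forall>x\<in>deltaS I pe2. w x = x \<longrightarrow> (\<forall>y\<in>Idx I. w y = x \<longrightarrow> y = x))
     \<and> (\<forall>y\<in>deltaS I pc1. w (u y) = v y) \<and> (\<forall>x\<in>deltaS I pe2. u (w x) = v x)
     \<and> (\<forall>z\<in>deltaS I pd2. \<forall>x\<in>deltaS I pe2. u z = v x \<longrightarrow> z = w x)"
  proof -
    have su: "\<forall>x\<in>Idx I. (x, u x) \<in> sim I" "\<forall>x\<in>Idx I. \<forall>y\<in>Idx I. u x = u y \<longrightarrow> u x \<noteq> x \<longrightarrow> u y \<noteq> y \<longrightarrow> x = y"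
      using ou unfolding okmap_def by blast+
    have sv: "\<forall>x\<in>Idx I. (x, v x) \<in> sim I" "\<forall>x\<in>Idx I. \<forall>y\<in>Idx I. v x = v y \<longrightarrow> v x \<noteq> x \<longrightarrow> v y \<noteq> y \<longrightarrow> x = y"
      using ov unfolding okmap_def by blast+
    have f1: "\<forall>x\<in>Idx I. u x \<noteq> x \<longrightarrow> x \<in> deltaS I pc1" "\<forall>x\<in>deltaS I pc1. u x = x \<longrightarrow> (\<forall>y\<in>Idx I. u y = x \<longrightarrow> y = x)"
      using ouc unfolding okfor_def by blast+
    have f2: "\<forall>x\<in>Idx I. u x \<noteq> x \<longrightarrow> x \<in> deltaS I pd2" "\<forall>x\<in>deltaS I pd2. u x = x \<longrightarrow> (\<forall>y\<in>Idx I. u y = x \<longrightarrow> y = x)"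
      using oud unfolding okfor_def by blast+
    have f3: "\<forall>x\<in>Idx I. v x \<noteq> x \<longrightarrow> x \<in> deltaS I pc1" "\<forall>x\<in>deltaS I pc1. v x = x \<longrightarrow> (\<forall>y\<in>Idx I. v y = x \<longrightarrow> y = x)"
      using ovc unfolding okfor_def by blast+
    have f4: "\<forall>x\<in>Idx I. v x \<noteq> x \<longrightarrow> x \<in> deltaS I pe2" "\<forall>x\<in>deltaS I pe2. v x = x \<longrightarrow> (\<forall>y\<in>Idx I. v y = x \<longrightarrow> y = x)"
      using ove unfolding okfor_def by blast+
    have sc1': "\<forall>a\<in>deltaS I pc1. \<forall>b\<in>deltaS I pc1. (a,b) \<in> sim I \<longrightarrow> a = b" using sc1 unfolding satT_def .
    show ?thesis
      by (rule index_core[OF eqv[OF V] su(1) sv(1) su(2) sv(2) dsub dsub dsub sc1' d2s e2s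
           f1(1) f1(2) f2(1) f2(2) f3(1) f3(2) f4(1) f4(2) c2])
  qed
  then obtain w where W: "(\<forall>x\<in>Idx I. (x, w x) \<in> sim I) \<and> (\<forall>x\<in>Idx I. \<forall>y\<in>Idx I. w x = w y \<longrightarrow> w x \<noteq> x \<longrightarrow> w y \<noteq> y \<longrightarrow> x = y) \<and> (\<forall>x\<in>Idx I. w x \<noteq> x \<longrightarrow> x \<in> u ` deltaS I pc1) \<and> (\<forall>x\<in>u ` deltaS I pc1. w x = x \<longrightarrow> (\<forall>y\<in>Idx I. w y = x \<longrightarrow> y = x)) \<and> (\<forall>x\<in>Idx I. w x \<noteq> x \<longrightarrow> x \<in> deltaS I pe2) \<and> (\<forall>x\<in>deltaS I pe2. w x = x \<longrightarrow> (\<forall>y\<in>Idx I. w y = x \<longrightarrow> y = x)) \<and> (\<forall>y\<in>deltaS I pc1. w (u y) = v y) \<and> (\<forall>x\<in>deltaS I pe2. u (w x) = v x) \<and> (\<forall>z\<in>deltaS I pd2. \<forall>x\<in>deltaS I pe2. u z = v x \<longrightarrow> z = w x)"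
    by (rule exE)
  have w1: "\<forall>x\<in>Idx I. (x, w x) \<in> sim I" using W by (rule conjunct1)
  have r0: "(\<forall>x\<in>Idx I. \<forall>y\<in>Idx I. w x = w y \<longrightarrow> w x \<noteq> x \<longrightarrow> w y \<noteq> y \<longrightarrow> x = y) \<and> (\<forall>x\<in>Idx I. w x \<noteq> x \<longrightarrow> x \<in> u ` deltaS I pc1) \<and> (\<forall>x\<in>u ` deltaS I pc1. w x = x \<longrightarrow> (\<forall>y\<in>Idx I. w y = x \<longrightarrow> y = x)) \<and> (\<forall>x\<in>Idx I. w x \<noteq> x \<longrightarrow> x \<in> deltaS I pe2) \<and> (\<forall>x\<in>deltaS I pe2. w x = x \<longrightarrow> (\<forall>y\<in>Idx I. w y = x \<longrightarrow> y = x)) \<and> (\<forall>y\<in>deltaS I pc1. w (u y) = v y) \<and> (\<forall>x\<in>deltaS I pe2. u (w x) = v x) \<and> (\<forall>z\<in>deltaS I pd2. \<forall>x\<in>deltaS I pe2. u z = v x \<longrightarrow> z = w x)" using W by (rule conjunct2)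
  have w2: "\<forall>x\<in>Idx I. \<forall>y\<in>Idx I. w x = w y \<longrightarrow> w x \<noteq> x \<longrightarrow> w y \<noteq> y \<longrightarrow> x = y" using r0 by (rule conjunct1)
  have r1: "(\<forall>x\<in>Idx I. w x \<noteq> x \<longrightarrow> x \<in> u ` deltaS I pc1) \<and> (\<forall>x\<in>u ` deltaS I pc1. w x = x \<longrightarrow> (\<forall>y\<in>Idx I. w y = x \<longrightarrow> y = x)) \<and> (\<forall>x\<in>Idx I. w x \<noteq> x \<longrightarrow> x \<in> deltaS I pe2) \<and> (\<forall>x\<in>deltaS I pe2. w x = x \<longrightarrow> (\<forall>y\<in>Idx I. w y = x \<longrightarrow> y = x)) \<and> (\<forall>y\<in>deltaS I pc1. w (u y) = v y) \<and> (\<forall>x\<in>deltaS I pe2. u (w x) = v x) \<and> (\<forall>z\<in>deltaS I pd2. \<forall>x\<in>deltaS I pe2. u z = v x \<longrightarrow> z = w x)" using r0 by (rule conjunct2)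
  have w3: "\<forall>x\<in>Idx I. w x \<noteq> x \<longrightarrow> x \<in> u ` deltaS I pc1" using r1 by (rule conjunct1)
  have r2: "(\<forall>x\<in>u ` deltaS I pc1. w x = x \<longrightarrow> (\<forall>y\<in>Idx I. w y = x \<longrightarrow> y = x)) \<and> (\<forall>x\<in>Idx I. w x \<noteq> x \<longrightarrow> x \<in> deltaS I pe2) \<and> (\<forall>x\<in>deltaS I pe2. w x = x \<longrightarrow> (\<forall>y\<in>Idx I. w y = x \<longrightarrow> y = x)) \<and> (\<forall>y\<in>deltaS I pc1. w (u y) = v y) \<and> (\<forall>x\<in>deltaS I pe2. u (w x) = v x) \<and> (\<forall>z\<in>deltaS I pd2. \<forall>x\<in>deltaS I pe2. u z = v x \<longrightarrow> z = w x)" using r1 by (rule conjunct2)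
  have w4: "\<forall>x\<in>u ` deltaS I pc1. w x = x \<longrightarrow> (\<forall>y\<in>Idx I. w y = x \<longrightarrow> y = x)" using r2 by (rule conjunct1)
  have r3: "(\<forall>x\<in>Idx I. w x \<noteq> x \<longrightarrow> x \<in> deltaS I pe2) \<and> (\<forall>x\<in>deltaS I pe2. w x = x \<longrightarrow> (\<forall>y\<in>Idx I. w y = x \<longrightarrow> y = x)) \<and> (\<forall>y\<in>deltaS I pc1. w (u y) = v y) \<and> (\<forall>x\<in>deltaS I pe2. u (w x) = v x) \<and> (\<forall>z\<in>deltaS I pd2. \<forall>x\<in>deltaS I pe2. u z = v x \<longrightarrow> z = w x)" using r2 by (rule conjunct2)
  have w5: "\<forall>x\<in>Idx I. w x \<noteq> x \<longrightarrow> x \<in> deltaS I pe2" using r3 by (rule conjunct1)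
  have r4: "(\<forall>x\<in>deltaS I pe2. w x = x \<longrightarrow> (\<forall>y\<in>Idx I. w y = x \<longrightarrow> y = x)) \<and> (\<forall>y\<in>deltaS I pc1. w (u y) = v y) \<and> (\<forall>x\<in>deltaS I pe2. u (w x) = v x) \<and> (\<forall>z\<in>deltaS I pd2. \<forall>x\<in>deltaS I pe2. u z = v x \<longrightarrow> z = w x)" using r3 by (rule conjunct2)
  have w6: "\<forall>x\<in>deltaS I pe2. w x = x \<longrightarrow> (\<forall>y\<in>Idx I. w y = x \<longrightarrow> y = x)" using r4 by (rule conjunct1)
  have r5: "(\<forall>y\<in>deltaS I pc1. w (u y) = v y) \<and> (\<forall>x\<in>deltaS I pe2. u (w x) = v x) \<and> (\<forall>z\<in>deltaS I pd2. \<forall>x\<in>deltaS I pe2. u z = v x \<longrightarrow> z = w x)" using r4 by (rule conjunct2)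
  have w7: "\<forall>y\<in>deltaS I pc1. w (u y) = v y" using r5 by (rule conjunct1)
  have r6: "(\<forall>x\<in>deltaS I pe2. u (w x) = v x) \<and> (\<forall>z\<in>deltaS I pd2. \<forall>x\<in>deltaS I pe2. u z = v x \<longrightarrow> z = w x)" using r5 by (rule conjunct2)
  have w8: "\<forall>x\<in>deltaS I pe2. u (w x) = v x" using r6 by (rule conjunct1)
  have r7: "(\<forall>z\<in>deltaS I pd2. \<forall>x\<in>deltaS I pe2. u z = v x \<longrightarrow> z = w x)" using r6 by (rule conjunct2)
  have w9: "\<forall>z\<in>deltaS I pd2. \<forall>x\<in>deltaS I pe2. u z = v x \<longrightarrow> z = w x" using r7 .
  have ow: "okmap I w" unfolding okmap_def using w1 w2 by blast
  have owd1: "okfor I w (deltaS I pd1)" unfolding okfor_def dd1 using w3 w4 by blast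
  have owe2: "okfor I w (deltaS I pe2)" unfolding okfor_def using w5 w6 by blast
  have eq1: "pe1 = tr I w ` pd1"
  proof -
    have "tr I w ` pd1 = (\<lambda>f. tr I w (tr I u f)) ` pc1" using pd1 by (simp add: image_image)
    also have "\<dots> = tr I v ` pc1"
    proof (rule image_cong[OF refl])
      fix f assume f: "f \<in> pc1"
      obtain x where x: "x \<in> Idx I" "f \<in> part I x" using feats_part[OF V] f sc by blast
      have "x \<in> deltaS I pc1" unfolding deltaS_def using x f by blast
      then have "w (u x) = v x" using w7 by blast
      then show "tr I w (tr I u f) = tr I v f" using tr_comp[OF V ou ow ov x] by blast
    qed
    finally show ?thesis using pe1 by simp
  qed
  have key: "\<And>f. f \<in> pe2 \<Longrightarrow> \<exists>x\<in>deltaS I pe2. f \<in> part I x \<and> tr I w f \<in> part I (w x) \<and> w x \<in> Idx I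
               \<and> tr I u (tr I w f) = tr I v f \<and> tr I v f \<in> part I (v x) \<and> v x \<in> Idx I"
  proof -
    fix f assume f: "f \<in> pe2"
    obtain x where x: "x \<in> Idx I" "f \<in> part I x" using feats_part[OF V] f se by blast
    have xe: "x \<in> deltaS I pe2" unfolding deltaS_def using x f by blast
    have m: "tr I w f \<in> part I (w x)" "w x \<in> Idx I" using tr_mem[OF V ow x] by auto
    have "tr I u (tr I w f) = tr I v f" using tr_comp[OF V ow ou ov x] w8 xe by blast
    moreover have "tr I v f \<in> part I (v x)" "v x \<in> Idx I" using tr_mem[OF V ov x] by auto
    ultimately show "?thesis f" using xe x m by blast
  qed
  have keyd: "\<And>g. g \<in> pd2 \<Longrightarrow> \<exists>z\<in>deltaS I pd2. g \<in> part I z \<and> tr I u g \<in> part I (u z) \<and> u z \<in> Idx I"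
  proof -
    fix g assume g: "g \<in> pd2"
    obtain z where z: "z \<in> Idx I" "g \<in> part I z" using feats_part[OF V] g sd by blast
    have "z \<in> deltaS I pd2" unfolding deltaS_def using z g by blast
    then show "?thesis g" using z tr_mem[OF V ou z] by blast
  qed
  have eq2: "pd2 = tr I w ` pe2"
  proof
    show "tr I w ` pe2 \<subseteq> pd2"
    proof
      fix h assume "h \<in> tr I w ` pe2"
      then obtain f where f: "f \<in> pe2" "h = tr I w f" by blast
      obtain x where x: "x \<in> deltaS I pe2" "f \<in> part I x" "tr I w f \<in> part I (w x)" "w x \<in> Idx I"
        "tr I u (tr I w f) = tr I v f" "tr I v f \<in> part I (v x)" "v x \<in> Idx I" using key[OF f(1)] by blast
      have "tr I v f \<in> pc2" using pc2' f by blast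
      then obtain g where g: "g \<in> pd2" "tr I v f = tr I u g" using pc2 by blast
      obtain z where z: "z \<in> deltaS I pd2" "g \<in> part I z" "tr I u g \<in> part I (u z)" "u z \<in> Idx I"
        using keyd[OF g(1)] by blast
      have "u z = v x" using disj[OF V] z x g by metis
      then have "z = w x" using w9 z x by blast
      then have "g = tr I w f" using tr_inj[OF V ou x(4) _ x(3)] z g x by metis
      then show "h \<in> pd2" using g f by simp
    qed
    show "pd2 \<subseteq> tr I w ` pe2"
    proof
      fix g assume g: "g \<in> pd2"
      obtain z where z: "z \<in> deltaS I pd2" "g \<in> part I z" "tr I u g \<in> part I (u z)" "u z \<in> Idx I"
        using keyd[OF g] by blast
      have "tr I u g \<in> pc2" using pc2 g by blast
      then obtain f where f: "f \<in> pe2" "tr I u g = tr I v f" using pc2' by blast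
      obtain x where x: "x \<in> deltaS I pe2" "f \<in> part I x" "tr I w f \<in> part I (w x)" "w x \<in> Idx I"
        "tr I u (tr I w f) = tr I v f" "tr I v f \<in> part I (v x)" "v x \<in> Idx I" using key[OF f(1)] by blast
      have "u z = v x" using disj[OF V] z x f by metis
      then have "z = w x" using w9 z x by blast
      then have "g = tr I w f" using tr_inj[OF V ou x(4) _ x(3)] z f x by metis
      then show "g \<in> tr I w ` pe2" using f by blast
    qed
  qed
  show ?thesis using ow owd1 owe2 eq1 eq2 by blast
qed

end

theorem proposition7:
  fixes C1 C2 D1 D2 E1 E2 :: "('a,'r) concept"
    and I :: "('a,'r,'d,'f) dci"
  assumes "natural C1" "natural C2" "natural D1" "natural D2" "natural E1" "natural E2"
    and "is_model I {Analogy C1 D1 D2 C2, Analogy C1 E1 E2 C2}"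
  shows "sat I (Analogy D1 E1 E2 D2)"
proof -
  have V: "valid_dci I" using assms(7) unfolding is_model_def by blast
  have a1: "mu I C1 D1 \<inter> mu I D2 C2 \<noteq> {}" using assms(7) unfolding is_model_def by simp
  have a2: "mu I C1 E1 \<inter> mu I E2 C2 \<noteq> {}" using assms(7) unfolding is_model_def by simp
  obtain \<sigma> where s: "\<sigma> \<in> mu I C1 D1" "\<sigma> \<in> mu I D2 C2" using a1 by blast
  obtain \<tau> where t: "\<tau> \<in> mu I C1 E1" "\<tau> \<in> mu I E2 C2" using a2 by blast
  obtain u where u: "okmap I u" "okfor I u (deltaS I (phi I C1))" "\<forall>x. x \<notin> Idx I \<longrightarrow> u x = x"
     "\<forall>f\<in>feats I. \<sigma> f = tr I u f" "phi I D1 = tr I u ` phi I C1"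
    using from_mu[OF V s(1)] by blast
  obtain u' where u': "okmap I u'" "okfor I u' (deltaS I (phi I D2))" "\<forall>x. x \<notin> Idx I \<longrightarrow> u' x = x"
     "\<forall>f\<in>feats I. \<sigma> f = tr I u' f" "phi I C2 = tr I u' ` phi I D2"
    using from_mu[OF V s(2)] by blast
  have uu: "u = u'" using canon_eq[OF V u(1) u'(1) u(3) u'(3)] u(4) u'(4) by simp
  obtain v where v: "okmap I v" "okfor I v (deltaS I (phi I C1))" "\<forall>x. x \<notin> Idx I \<longrightarrow> v x = x"
     "\<forall>f\<in>feats I. \<tau> f = tr I v f" "phi I E1 = tr I v ` phi I C1"
    using from_mu[OF V t(1)] by blast
  obtain v' where v': "okmap I v'" "okfor I v' (deltaS I (phi I E2))" "\<forall>x. x \<notin> Idx I \<longrightarrow> v' x = x"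
     "\<forall>f\<in>feats I. \<tau> f = tr I v' f" "phi I C2 = tr I v' ` phi I E2"
    using from_mu[OF V t(2)] by blast
  have vv: "v = v'" using canon_eq[OF V v(1) v'(1) v(3) v'(3)] v(4) v'(4) by simp
  have st: "\<And>C. phi I C = feats I \<or> satT I (deltaS I (phi I C))"
    using sat_type[OF V] unfolding satT_def by blast
  obtain w where w: "okmap I w" "okfor I w (deltaS I (phi I D1))" "okfor I w (deltaS I (phi I E2))"
     "phi I E1 = tr I w ` phi I D1" "phi I D2 = tr I w ` phi I E2"
    using core[OF V u(1) v(1) phi_sub[OF V] phi_sub[OF V] phi_sub[OF V] u(2) u'(2)[folded uu] v(2) v'(2)[folded vv]
       u(5) u'(5)[folded uu] v(5) v'(5)[folded vv] st st st] by blast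
  have m1: "sigU I (Wset I w) \<in> mu I D1 E1" using to_mu[OF V w(1) w(2) w(4)] .
  have m2: "sigU I (Wset I w) \<in> mu I E2 D2" using to_mu[OF V w(1) w(3) w(5)] .
  show ?thesis using m1 m2 by auto
qed

end
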